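(* Let $p\geq 2$ be an integer (not necessarily prime) and $r\in\{1,\ldots,p-1\}$. Define integers $D_{p,r}(n)$ by $$\prod_{i=0}^{\infty}\big(1-x^{p^{i}}\big)^{r}=\sum_{n=0}^{\infty}D_{p,r}(n)x^{n}.$$ Then for every $n\in\mathbb{N}$, $$D_{p,r}(n)=\prod_{i=0}^{p-1}(-1)^{iN_{p}(i,n)}\binom{r}{i}^{N_{p}(i,n)},$$ with the conventions $\binom{a}{b}=0$ for $b>a$ and $0^{0}=1$. Moreover, for every $j\in\{0,\ldots,p-1\}$ and every positive integer $n$, $$D_{p,r}(pn+j)=(-1)^{j}\binom{r}{j}D_{p,r}(n).$$
   Context: For integers $p\geq 2$, $n\geq 0$ and $i\in\{0,\ldots,p-1\}$, $N_p(i,n)$ denotes the number of digits equal to $i$ in the (unique) base-$p$ expansion $n=\sum_{j}\varepsilon_j p^j$, $\varepsilon_j\in\{0,\ldots,p-1\}$ (with $N_p(i,0)=0$). *)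

theory Defs
  imports "HOL-Computational_Algebra.Formal_Power_Series"
begin

text \<open>Number of digits equal to i in the base-p expansion of n. The digit positions
  of n \<ge> 1 are exactly the j with p^j \<le> n; for n = 0 there are none.\<close>
definition Ndig :: "nat \<Rightarrow> nat \<Rightarrow> nat \<Rightarrow> nat" where
  "Ndig p i n = card {j. p ^ j \<le> n \<and> (n div p ^ j) mod p = i}"

definition infprod_Dpr :: "nat \<Rightarrow> nat \<Rightarrow> int fps" where
  "infprod_Dpr p r = lim (\<lambda>K. \<Prod>i<K. (1 - fps_X ^ (p ^ i)) ^ r)"

definition D :: "nat \<Rightarrow> nat \<Rightarrow> nat \<Rightarrow> int" where
  "D p r n = fps_nth (infprod_Dpr p r) n"

end

theory Submission
  imports Defs
begin

function dd :: "nat \<Rightarrow> nat \<Rightarrow> nat \<Rightarrow> int" where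
  "dd p r n = (if n = 0 \<or> p < 2 then 1
     else (-1) ^ (n mod p) * int (r choose (n mod p)) * dd p r (n div p))"
  by auto
termination by (relation "measure (\<lambda>(p,r,n). n)") auto

declare dd.simps[simp del]

lemma dd0[simp]: "dd p r 0 = 1" by (simp add: dd.simps)

lemma dd_step: "p \<ge> 2 \<Longrightarrow> n > 0 \<Longrightarrow>
  dd p r n = (-1) ^ (n mod p) * int (r choose (n mod p)) * dd p r (n div p)"
  by (subst dd.simps) auto

lemma Ndig_finite: fixes n :: nat shows "p \<ge> 2 \<Longrightarrow> finite {j. p ^ j \<le> n \<and> (n div p ^ j) mod p = i}"
proof -
  assume p: "p \<ge> 2"
  have "{j. p ^ j \<le> n \<and> (n div p ^ j) mod p = i} \<subseteq> {..n}"
  proof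
    fix j assume "j \<in> {j. p ^ j \<le> n \<and> (n div p ^ j) mod p = i}"
    then have "p ^ j \<le> n" by simp
    moreover have "j < 2 ^ j" by (rule less_exp)
    moreover have "2 ^ j \<le> p ^ j" using p by (simp add: power_mono)
    ultimately have "j \<le> n" by linarith
    then show "j \<in> {..n}" by simp
  qed
  then show ?thesis using finite_subset by blast
qed

lemma Ndig0[simp]: "p \<ge> 2 \<Longrightarrow> Ndig p i 0 = 0"
  by (simp add: Ndig_def)

lemma Ndig_step:
  assumes p: "p \<ge> 2" and n: "n > 0"
  shows "Ndig p i n = Ndig p i (n div p) + (if n mod p = i then 1 else 0)"
proof -
  let ?A = "\<lambda>n. {j. p ^ j \<le> n \<and> (n div p ^ j) mod p = i}"
  have eq: "?A n = (if n mod p = i then {0} else {}) \<union> Suc ` ?A (n div p)"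
  proof (rule set_eqI)
    fix j show "j \<in> ?A n \<longleftrightarrow> j \<in> (if n mod p = i then {0} else {}) \<union> Suc ` ?A (n div p)"
    proof (cases j)
      case 0 then show ?thesis using n by auto
    next
      case (Suc k)
      have a: "p ^ Suc k \<le> n \<longleftrightarrow> p ^ k \<le> n div p" using p
        by (simp add: less_eq_div_iff_mult_less_eq mult.commute)
      have b: "n div p ^ Suc k = n div p div p ^ k"
        by (simp add: div_mult2_eq)
      show ?thesis using Suc a b by auto
    qed
  qed
  have "card (?A n) = card (if n mod p = i then {0::nat} else {}) + card (Suc ` ?A (n div p))"
    unfolding eq by (rule card_Un_disjoint) (auto simp: Ndig_finite[OF p])
  also have "card (Suc ` ?A (n div p)) = card (?A (n div p))" by (simp add: card_image)
  finally show ?thesis unfolding Ndig_def by auto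
qed

lemma dd_formula:
  assumes p: "p \<ge> 2"
  shows "dd p r n = (\<Prod>i<p. (-1) ^ (i * Ndig p i n) * (int (r choose i)) ^ Ndig p i n)"
proof (induction n rule: less_induct)
  case (less n)
  let ?g = "\<lambda>i. (-1::int) ^ i * int (r choose i)"
  have conv: "\<And>m. (\<Prod>i<p. (-1::int) ^ (i * Ndig p i m) * (int (r choose i)) ^ Ndig p i m)
      = (\<Prod>i<p. ?g i ^ Ndig p i m)"
    by (simp add: power_mult power_mult_distrib)
  show ?case
  proof (cases "n = 0")
    case True then show ?thesis using p by simp
  next
    case False
    then have n: "n > 0" by simp
    have IH: "dd p r (n div p) = (\<Prod>i<p. ?g i ^ Ndig p i (n div p))"
      using less[of "n div p"] n p conv by simp
    have mp: "n mod p < p" using p by simp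
    have "(\<Prod>i<p. ?g i ^ Ndig p i n)
        = (\<Prod>i<p. ?g i ^ Ndig p i (n div p) * ?g i ^ (if n mod p = i then 1 else 0))"
      by (simp add: Ndig_step[OF p n] power_add)
    also have "\<dots> = (\<Prod>i<p. ?g i ^ Ndig p i (n div p)) * (\<Prod>i<p. ?g i ^ (if n mod p = i then 1 else 0))"
      by (rule prod.distrib)
    also have "(\<Prod>i<p. ?g i ^ (if n mod p = i then 1 else 0)) = ?g (n mod p)"
    proof -
      have "(\<Prod>i<p. ?g i ^ (if n mod p = i then 1 else 0)) = (\<Prod>i<p. if n mod p = i then ?g i else 1)"
        by (rule prod.cong) auto
      also have "\<dots> = ?g (n mod p)" using mp by (simp add: prod.delta)
      finally show ?thesis .
    qed
    finally show ?thesis using conv[of n] IH dd_step[OF p n, of r] by simp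
  qed
qed


lemma dd_top:
  fixes K m q :: nat
  assumes p: "p \<ge> 2"
  shows "q < p \<Longrightarrow> m < p ^ K \<Longrightarrow>
    dd p r (q * p ^ K + m) = (-1) ^ q * int (r choose q) * dd p r m"
proof (induction K arbitrary: m)
  case 0
  then have m0: "m = 0" by simp
  show ?case
  proof (cases "q = 0")
    case True then show ?thesis using m0 by simp
  next
    case False
    then show ?thesis using m0 0 p dd_step[OF p, of q r] by simp
  qed
next
  case (Suc K)
  show ?case
  proof (cases "q = 0")
    case True then show ?thesis by simp
  next
    case False
    let ?n = "q * p ^ Suc K + m"
    have n: "?n > 0" using False p by simp
    have pp: "p > 0" using p by simp
    have mod: "?n mod p = m mod p" by (simp add: mod_add_left_eq[symmetric])
    have dv: "?n div p = q * p ^ K + m div p"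
    proof -
      have "?n = m + (q * p ^ K) * p" by (simp add: mult.commute mult.left_commute)
      moreover have "(m + (q * p ^ K) * p) div p = q * p ^ K + m div p"
        using pp by (subst div_mult_self1) auto
      ultimately show ?thesis by metis
    qed
    have mk: "m div p < p ^ K" using Suc.prems(2) pp
      by (simp add: div_less_iff_less_mult mult.commute)
    have "dd p r ?n = (-1) ^ (m mod p) * int (r choose (m mod p)) * dd p r (q * p ^ K + m div p)"
      using dd_step[OF p n, of r] mod dv by simp
    also have "\<dots> = (-1) ^ (m mod p) * int (r choose (m mod p)) *
        ((-1) ^ q * int (r choose q) * dd p r (m div p))"
      using Suc.IH[OF Suc.prems(1) mk] by simp
    also have "(-1) ^ (m mod p) * int (r choose (m mod p)) * dd p r (m div p) = dd p r m"
      using dd_step[OF p, of m r] by (cases "m = 0") auto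
    then have "(-1) ^ (m mod p) * int (r choose (m mod p)) *
        ((-1) ^ q * int (r choose q) * dd p r (m div p)) = (-1) ^ q * int (r choose q) * dd p r m"
      by (metis mult.left_commute)
    finally show ?thesis .
  qed
qed

lemma sum_group: fixes a b :: nat shows "(\<Sum>n<a*b. g n) = (\<Sum>k<a. \<Sum>m<b. g (k*b+m))"
proof (induction a)
  case 0 then show ?case by simp
next
  case (Suc a)
  have e1: "{..<Suc a*b} = {0..<a*b+b}" by auto
  have "(\<Sum>n\<in>{0..<a*b+b}. g n) = (\<Sum>n\<in>{0..<a*b}. g n) + (\<Sum>n\<in>{a*b..<a*b+b}. g n)"
    by (rule sum.atLeastLessThan_concat[symmetric]) auto
  moreover have "(\<Sum>n\<in>{a*b..<a*b+b}. g n) = (\<Sum>m\<in>{0..<b}. g (a*b+m))"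
    using sum.shift_bounds_nat_ivl[of g 0 "a*b" b] by (simp add: add.commute)
  moreover have "{0..<a*b} = {..<a*b}" "{0..<b} = {..<b}" by auto
  ultimately have "(\<Sum>n<Suc a*b. g n) = (\<Sum>n<a*b. g n) + (\<Sum>m<b. g (a*b+m))"
    using e1 by metis
  then show ?case using Suc by simp
qed

lemma Q_expand:
  fixes M :: nat
  assumes "r < p"
  shows "(1 - fps_X ^ M :: int fps) ^ r =
    (\<Sum>k<p. fps_const ((-1) ^ k * int (r choose k)) * fps_X ^ (k * M))"
proof -
  have "(1 - fps_X ^ M :: int fps) ^ r = (- (fps_X ^ M) + 1) ^ r" by simp
  also have "\<dots> = (\<Sum>k\<le>r. of_nat (r choose k) * (- (fps_X ^ M)) ^ k * 1 ^ (r - k))"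
    by (rule binomial_ring)
  also have "\<dots> = (\<Sum>k\<le>r. fps_const ((-1) ^ k * int (r choose k)) * fps_X ^ (k * M))"
  proof (rule sum.cong)
    fix k
    have m1: "(-1 :: int fps) ^ k = fps_const ((-1) ^ k)"
      by (simp add: fps_const_power[symmetric] fps_const_neg[symmetric])
    have "(- (fps_X ^ M) :: int fps) ^ k = (-1) ^ k * (fps_X ^ M) ^ k"
      by (rule power_minus)
    also have "(fps_X ^ M :: int fps) ^ k = fps_X ^ (k * M)"
      by (subst mult.commute) (rule power_mult[symmetric])
    finally have e: "(- (fps_X ^ M) :: int fps) ^ k = fps_const ((-1) ^ k) * fps_X ^ (k * M)"
      using m1 by simp
    have c: "(of_nat (r choose k) :: int fps) = fps_const (int (r choose k))"
      by (simp add: fps_of_nat)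
    show "of_nat (r choose k) * (- (fps_X ^ M)) ^ k * 1 ^ (r - k) =
      fps_const ((-1) ^ k * int (r choose k)) * (fps_X ^ (k * M) :: int fps)"
      unfolding e c power_one mult_1_right fps_const_mult[symmetric]
      by (simp only: mult_ac)
  qed simp
  also have "\<dots> = (\<Sum>k<p. fps_const ((-1) ^ k * int (r choose k)) * fps_X ^ (k * M))"
    using assms by (intro sum.mono_neutral_left) auto
  finally show ?thesis .
qed

lemma partial_prod:
  assumes p: "p \<ge> 2" and rp: "r < p"
  shows "(\<Prod>i<K. (1 - fps_X ^ (p ^ i)) ^ r :: int fps) =
    (\<Sum>n<p^K. fps_const (dd p r n) * fps_X ^ n)"
proof (induction K)
  case 0 then show ?case by simp
next
  case (Suc K)
  let ?f = "\<lambda>k. (-1::int) ^ k * int (r choose k)"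
  have "(\<Prod>i<Suc K. (1 - fps_X ^ (p ^ i)) ^ r :: int fps) =
      (\<Sum>n<p^K. fps_const (dd p r n) * fps_X ^ n) * (1 - fps_X ^ (p ^ K)) ^ r"
    by (simp only: prod.lessThan_Suc Suc.IH)
  also have "\<dots> = (\<Sum>n<p^K. fps_const (dd p r n) * fps_X ^ n) *
      (\<Sum>k<p. fps_const (?f k) * fps_X ^ (k * p ^ K))"
    by (simp only: Q_expand[OF rp])
  also have "\<dots> = (\<Sum>k<p. \<Sum>m<p^K. fps_const (?f k) * fps_X ^ (k * p ^ K) *
      (fps_const (dd p r m) * fps_X ^ m))"
    by (subst mult.commute) (rule sum_product)
  also have "\<dots> = (\<Sum>k<p. \<Sum>m<p^K. fps_const (dd p r (k * p ^ K + m)) * fps_X ^ (k * p ^ K + m))"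
  proof (intro sum.cong refl)
    fix k m assume k: "k \<in> {..<p}" and m: "m \<in> {..<p^K}"
    have kp: "k < p" and mp: "m < p ^ K" using k m by auto
    have e: "dd p r (k * p ^ K + m) = ?f k * dd p r m" using dd_top[OF p kp mp, of r] .
    show "fps_const (?f k) * fps_X ^ (k * p ^ K) * (fps_const (dd p r m) * fps_X ^ m) =
      fps_const (dd p r (k * p ^ K + m)) * (fps_X ^ (k * p ^ K + m) :: int fps)"
      unfolding e power_add fps_const_mult[symmetric] by (simp only: mult_ac)
  qed
  also have "\<dots> = (\<Sum>n<p * p^K. fps_const (dd p r n) * fps_X ^ n)"
    by (rule sum_group[symmetric])
  finally show ?case by (simp only: power_Suc)
qed

theorem lemma2p1:
  fixes p r :: nat
  assumes "p \<ge> 2" and "1 \<le> r" and "r \<le> p - 1"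
  shows "(\<forall>n. D p r n =
            (\<Prod>i<p. (-1) ^ (i * Ndig p i n) * (int (r choose i)) ^ Ndig p i n))
       \<and> (\<forall>j n. j < p \<longrightarrow> n > 0 \<longrightarrow>
            D p r (p * n + j) = (-1) ^ j * int (r choose j) * D p r n)"
proof -
  have p: "p \<ge> 2" and rp: "r < p" using assms by auto
  let ?P = "\<lambda>K. (\<Prod>i<K. (1 - fps_X ^ (p ^ i)) ^ r :: int fps)"
  have lim: "?P \<longlonglongrightarrow> Abs_fps (dd p r)"
  proof (rule tendsto_fpsI)
    fix n
    show "eventually (\<lambda>K. fps_nth (?P K) n = fps_nth (Abs_fps (dd p r)) n) sequentially"
    proof (rule eventually_sequentiallyI[of n])
      fix K assume K: "n \<le> K"
      have "n < 2 ^ n" by (rule less_exp)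
      also have "\<dots> \<le> p ^ n" using p by (simp add: power_mono)
      also have "\<dots> \<le> p ^ K" using p K by (simp add: power_increasing)
      finally have nK: "n < p ^ K" .
      have "fps_nth (?P K) n = (\<Sum>m<p^K. if n = m then dd p r m else 0)"
        unfolding partial_prod[OF p rp] fps_sum_nth by (intro sum.cong) auto
      also have "\<dots> = dd p r n" using nK
        by (simp add: sum.delta)
      finally show "fps_nth (?P K) n = fps_nth (Abs_fps (dd p r)) n" by simp
    qed
  qed
  have Deq: "D p r n = dd p r n" for n
    unfolding D_def infprod_Dpr_def using limI[OF lim] by simp
  show ?thesis
  proof (intro conjI allI impI)
    fix n show "D p r n =
            (\<Prod>i<p. (-1) ^ (i * Ndig p i n) * (int (r choose i)) ^ Ndig p i n)"
      using Deq dd_formula[OF p] by simp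
  next
    fix j n :: nat assume j: "j < p" and n: "n > 0"
    have pos: "p * n + j > 0" using n p by simp
    have "(p * n + j) mod p = j" using j by simp
    moreover have "(p * n + j) div p = n" using j p by simp
    ultimately show "D p r (p * n + j) = (-1) ^ j * int (r choose j) * D p r n"
      using Deq dd_step[OF p pos, of r] by simp
  qed
qed

end
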